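(* Let $E$ be an unstable torsion free sheaf of rank $r$ on a smooth complex projective variety $X$ of dimension $n$, let $m$ be sufficiently large, $V=H^0(E(m))$, and let $0\subsetneq V_1\subsetneq\cdots\subsetneq V_{t+1}=V$ be the Kempf filtration of $V$. Set $V^i=V_i/V_{i-1}$, $r^i=r_i-r_{i-1}$ and $$v_i=m^{n+1}\frac{r^i\dim V-r\dim V^i}{\dim V^i\dim V}.$$ Then $v_1<v_2<\cdots<v_{t+1}$ (i.e. the associated graph with vertices $(\dim V_i/m^n,\ \frac{m}{\dim V}(r\dim V_i-r_i\dim V))$ is convex).
   Context: Here $r_i$ is the rank of the subsheaf $E_{V_i}\subset E$ generated by $V_i$ under evaluation ($r_0=0$, $V_0=0$). "Sufficiently large" means $E(m)$ globally generated with $h^0(E(m))=P_E(m)$ and $m$ beyond the integer from which $E$ unstable implies the corresponding GIT point is unstable. With $p=\dim V$: a weighted filtration of $V$ is $0\subsetneq V_1\subsetneq\cdots\subsetneq V_{t+1}=V$ with rationals $n_i>0$; $\Gamma_1<\dots<\Gamma_{t+1}$ are determined by $\Gamma_{i+1}-\Gamma_i=pn_i$, $\sum\Gamma_i\dim V^i=0$. The Kempf function $\mu(V_\bullet,n_\bullet)=\sum_{i=1}^tn_i(r\dim V_i-r_i\dim V)/\sqrt{\sum_i\dim V^i\,\Gamma_i^2}$ has (Kempf's theorem) a unique maximizing weighted filtration up to common rescaling of the weights; its underlying filtration is the Kempf filtration of $V$. *)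

theory Defs
  imports "HOL-Analysis.Analysis"
begin

text \<open>The vector space V = H^0(E(m)) is modelled as the complex vector space
  complex^'k (finite dimensional; p = CARD('k) = dim V).
  The rank function rk assigns to a subspace W of V the rank of the subsheaf E_W of E
  generated by W.\<close>

type_synonym 'k cvec = "complex ^ 'k"

definition cdim :: "'k::finite cvec set \<Rightarrow> nat" where
  "cdim W = vec.dim W"

definition is_filtration :: "nat \<Rightarrow> (nat \<Rightarrow> 'k::finite cvec set) \<Rightarrow> bool" where
  "is_filtration t Vf \<longleftrightarrow>
     Vf 0 = {0} \<and> Vf (Suc t) = UNIV \<and>
     (\<forall>i \<le> Suc t. vec.subspace (Vf i)) \<and>
     (\<forall>i \<le> t. Vf i \<subset> Vf (Suc i))"

definition is_weighted_filtration ::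
    "nat \<Rightarrow> (nat \<Rightarrow> 'k::finite cvec set) \<Rightarrow> (nat \<Rightarrow> rat) \<Rightarrow> bool" where
  "is_weighted_filtration t Vf nw \<longleftrightarrow>
     is_filtration t Vf \<and> (\<forall>i\<in>{1..t}. nw i > 0)"

definition gdim :: "(nat \<Rightarrow> 'k::finite cvec set) \<Rightarrow> nat \<Rightarrow> nat" where
  "gdim Vf i = cdim (Vf i) - cdim (Vf (i - 1))"

text \<open>Gamma_1 < ... < Gamma_(t+1), determined by Gamma_(i+1) - Gamma_i = p n_i and
  sum_i dim V^i Gamma_i = 0, where p = dim V.\<close>
definition Gam :: "nat \<Rightarrow> (nat \<Rightarrow> 'k::finite cvec set) \<Rightarrow> (nat \<Rightarrow> rat) \<Rightarrow> nat \<Rightarrow> real" where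
  "Gam t Vf nw i =
     (let p = real CARD('k);
          S = (\<lambda>j. p * (\<Sum>l\<in>{1..<j}. real_of_rat (nw l)))
      in S i - (\<Sum>k\<in>{1..Suc t}. real (gdim Vf k) * S k) / p)"

definition kempf_mu ::
    "nat \<Rightarrow> ('k::finite cvec set \<Rightarrow> nat) \<Rightarrow> nat \<Rightarrow> (nat \<Rightarrow> 'k cvec set) \<Rightarrow> (nat \<Rightarrow> rat) \<Rightarrow> real" where
  "kempf_mu r rk t Vf nw =
     (\<Sum>i\<in>{1..t}. real_of_rat (nw i) *
        (real r * real (cdim (Vf i)) - real (rk (Vf i)) * real CARD('k)))
     / sqrt (\<Sum>i\<in>{1..Suc t}. real (gdim Vf i) * (Gam t Vf nw i)^2)"

text \<open>The Kempf filtration: the underlying filtration of a weighted filtration maximizing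
  the Kempf function (by Kempf's theorem this maximizer is unique up to rescaling).\<close>
definition is_kempf_filtration ::
    "nat \<Rightarrow> ('k::finite cvec set \<Rightarrow> nat) \<Rightarrow> nat \<Rightarrow> (nat \<Rightarrow> 'k cvec set) \<Rightarrow> bool" where
  "is_kempf_filtration r rk t Vf \<longleftrightarrow>
     (\<exists>nw. is_weighted_filtration t Vf nw \<and>
        (\<forall>t' (Vf' :: nat \<Rightarrow> 'k cvec set) nw'. is_weighted_filtration t' Vf' nw' \<longrightarrow>
            kempf_mu r rk t' Vf' nw' \<le> kempf_mu r rk t Vf nw))"

end

theory Submission
  imports Defs
begin


lemma sbp:
  fixes G a :: "nat \<Rightarrow> real"
  shows "(\<Sum>j\<in>{1..t}. (G (Suc j) - G j) * a j) =
     (\<Sum>k\<in>{1..Suc t}. G k * (a (k - 1) - a k)) - G 1 * a 0 + G (Suc t) * a (Suc t)"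
  by (induction t) (simp_all add: algebra_simps)

lemma tele:
  fixes D :: "nat \<Rightarrow> real"
  shows "(\<Sum>k\<in>{1..n}. D k - D (k - 1)) = D n - D 0"
  by (induction n) simp_all

lemma uniq:
  fixes F G g :: "nat \<Rightarrow> real"
  assumes d: "\<forall>j\<in>{1..t}. F (Suc j) - F j = G (Suc j) - G j"
    and s: "(\<Sum>k\<in>{1..Suc t}. g k * F k) = (\<Sum>k\<in>{1..Suc t}. g k * G k)"
    and nz: "(\<Sum>k\<in>{1..Suc t}. g k) \<noteq> 0"
    and k: "k \<in> {1..Suc t}"
  shows "F k = G k"
proof -
  have c: "F k - G k = F 1 - G 1" if "1 \<le> k" "k \<le> Suc t" for k
    using that
  proof (induction k rule: dec_induct)
    case base then show ?case by simp
  next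
    case (step k)
    then have "F (Suc k) - F k = G (Suc k) - G k" using d by auto
    then show ?case using step by linarith
  qed
  have "(\<Sum>k\<in>{1..Suc t}. g k * (F k - G k)) = 0"
    using s by (simp only: right_diff_distrib sum_subtractf)
  moreover have "(\<Sum>k\<in>{1..Suc t}. g k * (F k - G k)) = (\<Sum>k\<in>{1..Suc t}. (F 1 - G 1) * g k)"
  proof (intro sum.cong refl)
    fix k assume "k \<in> {1..Suc t}"
    then show "g k * (F k - G k) = (F 1 - G 1) * g k" using c[of k] by simp
  qed
  moreover have "(\<Sum>k\<in>{1..Suc t}. (F 1 - G 1) * g k) = (F 1 - G 1) * (\<Sum>k\<in>{1..Suc t}. g k)"
    by (simp only: sum_distrib_left)
  ultimately have "F 1 - G 1 = 0" using nz by simp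
  then show ?thesis using c[of k] k by simp
qed

lemma reidx:
  fixes f F :: "nat \<Rightarrow> real"
  assumes "1 \<le> i" "i \<le> t" "\<forall>k. k < i \<longrightarrow> F k = f k" "\<forall>k. i < k \<and> k \<le> t \<longrightarrow> F k = f (Suc k)"
  shows "(\<Sum>k\<in>{1..t}. F k) = (\<Sum>k\<in>{1..Suc t}. f k) - f i - f (Suc i) + F i"
proof -
  have "s \<le> t \<longrightarrow> (\<Sum>k\<in>{1..s}. F k) = (\<Sum>k\<in>{1..Suc s}. f k) - f i - f (Suc i) + F i"
    if "i \<le> s" for s
    using that
  proof (induction s rule: dec_induct)
    case base
    have "(\<Sum>k\<in>{1..<i}. F k) = (\<Sum>k\<in>{1..<i}. f k)"
      using assms(3) by (intro sum.cong) auto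
    moreover have "{1..i} = insert i {1..<i}" using assms(1) by auto
    moreover have "{1..Suc i} = insert (Suc i) (insert i {1..<i})" using assms(1) by auto
    ultimately show ?case by simp
  next
    case (step s)
    then show ?case using assms(4) by simp
  qed
  then show ?thesis using assms(2) by simp
qed

lemma Gam_diff:
  assumes "1 \<le> j"
  shows "Gam t (Vf :: nat \<Rightarrow> 'k::finite cvec set) nw (Suc j) - Gam t Vf nw j = real CARD('k) * real_of_rat (nw j)"
proof -
  have "{1..<Suc j} = insert j {1..<j}" using assms by auto
  then show ?thesis unfolding Gam_def Let_def by (simp add: algebra_simps)
qed

lemma Gam_sum:
  assumes "(\<Sum>k\<in>{1..Suc t}. real (gdim (Vf :: nat \<Rightarrow> 'k::finite cvec set) k)) = real CARD('k)"
  shows "(\<Sum>k\<in>{1..Suc t}. real (gdim Vf k) * Gam t Vf nw k) = 0"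
proof -
  define p where "p = real CARD('k)"
  define S where "S = (\<lambda>j. p * (\<Sum>l\<in>{1..<j}. real_of_rat (nw l)))"
  define C where "C = (\<Sum>k\<in>{1..Suc t}. real (gdim Vf k) * S k) / p"
  have p: "p > 0" unfolding p_def by simp
  have "Gam t Vf nw = (\<lambda>k. S k - C)" unfolding Gam_def Let_def S_def C_def p_def by simp
  then have "(\<Sum>k\<in>{1..Suc t}. real (gdim Vf k) * Gam t Vf nw k)
      = (\<Sum>k\<in>{1..Suc t}. real (gdim Vf k) * S k) - C * (\<Sum>k\<in>{1..Suc t}. real (gdim Vf k))"
    by (simp add: algebra_simps sum_subtractf sum_distrib_left)
  also have "\<dots> = 0" using assms p unfolding C_def p_def by simp
  finally show ?thesis .
qed

lemma vdim0: "vec.dim {0 :: 'k::finite cvec} = 0"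
  by (metis vec.dim_span vec.span_empty vec.dim_empty)

lemma filt_facts:
  assumes "is_filtration t (Vf :: nat \<Rightarrow> 'k::finite cvec set)"
  shows "cdim (Vf 0) = 0" "cdim (Vf (Suc t)) = CARD('k)"
    "\<And>j. j \<le> t \<Longrightarrow> cdim (Vf j) < cdim (Vf (Suc j))"
proof -
  show "cdim (Vf 0) = 0" using assms vdim0 unfolding is_filtration_def cdim_def by simp
  show "cdim (Vf (Suc t)) = CARD('k)" using assms vec_dim_card unfolding is_filtration_def cdim_def by simp
  fix j assume j: "j \<le> t"
  have "vec.subspace (Vf j)" "vec.subspace (Vf (Suc j))" "Vf j \<subset> Vf (Suc j)"
    using assms j unfolding is_filtration_def by auto
  then show "cdim (Vf j) < cdim (Vf (Suc j))" unfolding cdim_def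
    by (metis vec.dim_psubset vec.span_eq_iff)
qed

lemma gd:
  assumes F: "is_filtration t (Vf :: nat \<Rightarrow> 'k::finite cvec set)" and k: "k \<le> Suc t"
  shows "real (gdim Vf k) = real (cdim (Vf k)) - real (cdim (Vf (k - 1)))"
proof (cases k)
  case 0 then show ?thesis unfolding gdim_def by simp
next
  case (Suc j)
  then have "cdim (Vf j) < cdim (Vf (Suc j))" using filt_facts(3)[OF F] k by simp
  then show ?thesis unfolding gdim_def using Suc by (simp add: of_nat_diff)
qed

lemma gpos:
  assumes F: "is_filtration t (Vf :: nat \<Rightarrow> 'k::finite cvec set)" and k: "k \<in> {1..Suc t}"
  shows "real (gdim Vf k) > 0"
proof -
  obtain j where j: "k = Suc j" "j \<le> t" using k by (cases k) auto
  then have "cdim (Vf j) < cdim (Vf (Suc j))" using filt_facts(3)[OF F] by simp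
  then show ?thesis using gd[OF F] k j by simp
qed

lemma gsum:
  assumes F: "is_filtration t (Vf :: nat \<Rightarrow> 'k::finite cvec set)"
  shows "(\<Sum>k\<in>{1..Suc t}. real (gdim Vf k)) = real CARD('k)"
proof -
  have "(\<Sum>k\<in>{1..Suc t}. real (gdim Vf k)) =
        (\<Sum>k\<in>{1..Suc t}. real (cdim (Vf k)) - real (cdim (Vf (k - 1))))"
    using gd[OF F] by (intro sum.cong) auto
  also have "\<dots> = real (cdim (Vf (Suc t))) - real (cdim (Vf 0))" by (rule tele)
  finally show ?thesis using filt_facts[OF F] by simp
qed

lemma mu_formula:
  assumes F: "is_filtration t (Vf :: nat \<Rightarrow> 'k::finite cvec set)"
    and rz: "rk {0} = 0" and rt: "rk UNIV = r"
  shows "kempf_mu r rk t Vf nw =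
    (\<Sum>k\<in>{1..Suc t}. Gam t Vf nw k * (real (rk (Vf k)) - real (rk (Vf (k - 1)))))
    / sqrt (\<Sum>k\<in>{1..Suc t}. real (gdim Vf k) * (Gam t Vf nw k)^2)"
proof -
  define p where "p = real CARD('k)"
  define G where "G = Gam t Vf nw"
  define a where "a = (\<lambda>j. real r * real (cdim (Vf j)) - real (rk (Vf j)) * p)"
  have p: "p > 0" unfolding p_def by simp
  have V0: "Vf 0 = {0}" "Vf (Suc t) = UNIV" using F unfolding is_filtration_def by auto
  have a0: "a 0 = 0" unfolding a_def using V0 rz filt_facts[OF F] by simp
  have aT: "a (Suc t) = 0" unfolding a_def using V0 rt filt_facts[OF F] p_def by simp
  have "(\<Sum>j\<in>{1..t}. real_of_rat (nw j) * (real r * real (cdim (Vf j)) - real (rk (Vf j)) * real CARD('k)))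
      = (\<Sum>j\<in>{1..t}. (G (Suc j) - G j) * a j) / p"
    unfolding sum_divide_distrib
  proof (intro sum.cong refl)
    fix j assume "j \<in> {1..t}"
    then have "G (Suc j) - G j = p * real_of_rat (nw j)" unfolding G_def p_def by (intro Gam_diff) auto
    then show "real_of_rat (nw j) * (real r * real (cdim (Vf j)) - real (rk (Vf j)) * real CARD('k))
       = (G (Suc j) - G j) * a j / p" using p unfolding a_def p_def by (simp add: field_simps)
  qed
  also have "(\<Sum>j\<in>{1..t}. (G (Suc j) - G j) * a j) = (\<Sum>k\<in>{1..Suc t}. G k * (a (k - 1) - a k))"
    using sbp[of G a t] a0 aT by simp
  also have "\<dots> = (\<Sum>k\<in>{1..Suc t}. p * (G k * (real (rk (Vf k)) - real (rk (Vf (k - 1)))))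
                     - real r * (real (gdim Vf k) * G k))"
  proof (intro sum.cong refl)
    fix k assume k: "k \<in> {1..Suc t}"
    show "G k * (a (k - 1) - a k) = p * (G k * (real (rk (Vf k)) - real (rk (Vf (k - 1))))) - real r * (real (gdim Vf k) * G k)"
    proof -
      have e: "real (gdim Vf k) = real (cdim (Vf k)) - real (cdim (Vf (k - 1)))" using gd[OF F, of k] k by simp
      show ?thesis unfolding a_def e by (simp add: algebra_simps)
    qed
  qed
  also have "\<dots> = p * (\<Sum>k\<in>{1..Suc t}. G k * (real (rk (Vf k)) - real (rk (Vf (k - 1)))))
        - real r * (\<Sum>k\<in>{1..Suc t}. real (gdim Vf k) * G k)"
    by (simp only: sum_subtractf sum_distrib_left)
  also have "(\<Sum>k\<in>{1..Suc t}. real (gdim Vf k) * G k) = 0"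
    unfolding G_def by (rule Gam_sum[OF gsum[OF F]])
  finally have num: "(\<Sum>j\<in>{1..t}. real_of_rat (nw j) * (real r * real (cdim (Vf j)) - real (rk (Vf j)) * real CARD('k)))
      = (\<Sum>k\<in>{1..Suc t}. G k * (real (rk (Vf k)) - real (rk (Vf (k - 1)))))" using p by simp
  show ?thesis unfolding kempf_mu_def num[unfolded G_def] by simp
qed




theorem lemma3p4:
  fixes r m n t :: nat
    and rk :: "'k::finite cvec set \<Rightarrow> nat"
    and Vf :: "nat \<Rightarrow> 'k cvec set"
  assumes "r \<ge> 1"
    and "m \<ge> 1"
    and rk_zero: "rk {0} = 0"
    and rk_top: "rk UNIV = r"
    and rk_mono: "\<And>W W'. vec.subspace W \<Longrightarrow> vec.subspace W' \<Longrightarrow> W \<subseteq> W' \<Longrightarrow> rk W \<le> rk W'"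
    and unstable: "\<exists>t' (Vf' :: nat \<Rightarrow> 'k cvec set) nw'.
                     is_weighted_filtration t' Vf' nw' \<and> kempf_mu r rk t' Vf' nw' > 0"
    and kempf: "is_kempf_filtration r rk t Vf"
  shows "\<forall>i\<in>{1..t}.
           (let v = (\<lambda>j. real m ^ (n + 1) *
                       ((real (rk (Vf j)) - real (rk (Vf (j - 1)))) * real CARD('k)
                          - real r * real (gdim Vf j))
                       / (real (gdim Vf j) * real CARD('k)))
            in v i < v (Suc i))"
proof -
  obtain nw where wf: "is_weighted_filtration t Vf nw"
    and mx: "\<And>t' (Vf' :: nat \<Rightarrow> 'k cvec set) nw'. is_weighted_filtration t' Vf' nw' \<Longrightarrow>
               kempf_mu r rk t' Vf' nw' \<le> kempf_mu r rk t Vf nw"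
    using kempf unfolding is_kempf_filtration_def by blast
  have F: "is_filtration t Vf" and nwpos: "\<And>j. j \<in> {1..t} \<Longrightarrow> nw j > 0"
    using wf unfolding is_weighted_filtration_def by auto
  have mupos: "kempf_mu r rk t Vf nw > 0"
    using unstable mx by (meson less_le_trans)
  define p where "p = real CARD('k)"
  have p: "p > 0" unfolding p_def by simp
  define \<Gamma> where "\<Gamma> = Gam t Vf nw"
  define g where "g = (\<lambda>k. real (gdim Vf k))"
  define R where "R = (\<lambda>k. real (rk (Vf k)))"
  have gp: "\<And>k. k \<in> {1..Suc t} \<Longrightarrow> g k > 0" unfolding g_def using gpos[OF F] by blast
  have key: "(R i - R (i - 1)) * g (Suc i) < (R (Suc i) - R i) * g i" if i: "i \<in> {1..t}" for i
  proof (rule ccontr)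
    assume "\<not> ?thesis"
    then have ge: "(R (Suc i) - R i) * g i \<le> (R i - R (i - 1)) * g (Suc i)" by simp
    obtain tt where tt: "t = Suc tt" using i by (cases t) auto
    have i1: "1 \<le> i" "i \<le> t" using i by auto
    define Vf' where "Vf' = (\<lambda>j. if j < i then Vf j else Vf (Suc j))"
    define GG where "GG = gdim Vf i + gdim Vf (Suc i)"
    define nw' where "nw' = (\<lambda>j. if j < i - 1 then nw j
        else if j = i - 1 then nw j + of_nat (gdim Vf (Suc i)) * nw i / of_nat GG
        else if j = i then nw (Suc i) + of_nat (gdim Vf i) * nw i / of_nat GG
        else nw (Suc j))"
    have gi: "g i > 0" "g (Suc i) > 0" using gp i by auto
    have GGr: "real GG = g i + g (Suc i)" unfolding GG_def g_def by simp
    have GGpos: "GG > 0" using GGr gi by linarith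
    have Fs: "Vf 0 = {0}" "Vf (Suc t) = UNIV" "\<And>j. j \<le> Suc t \<Longrightarrow> vec.subspace (Vf j)"
      "\<And>j. j \<le> t \<Longrightarrow> Vf j \<subset> Vf (Suc j)"
      using F unfolding is_filtration_def by auto
    have F': "is_filtration tt Vf'"
      unfolding is_filtration_def
    proof (intro conjI allI impI)
      show "Vf' 0 = {0}" using i1 Fs unfolding Vf'_def by simp
      show "Vf' (Suc tt) = UNIV" using i1 Fs tt unfolding Vf'_def by simp
      fix j
      show "j \<le> Suc tt \<Longrightarrow> vec.subspace (Vf' j)" using Fs(3) tt unfolding Vf'_def by auto
      assume j: "j \<le> tt"
      show "Vf' j \<subset> Vf' (Suc j)"
      proof (cases "Suc j < i")
        case True then show ?thesis using Fs(4)[of j] j tt unfolding Vf'_def by simp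
      next
        case False
        show ?thesis
        proof (cases "Suc j = i")
          case True
          then have "Vf j \<subset> Vf (Suc j)" "Vf (Suc j) \<subset> Vf (Suc (Suc j))" using Fs(4)[of j] Fs(4)[of "Suc j"] True i1 by auto
          then show ?thesis using True unfolding Vf'_def by auto
        next
          case False
          then show ?thesis using \<open>\<not> Suc j < i\<close> Fs(4)[of "Suc j"] j tt unfolding Vf'_def by simp
        qed
      qed
    qed
    have wf': "is_weighted_filtration tt Vf' nw'"
      unfolding is_weighted_filtration_def
    proof (intro conjI F' ballI)
      fix j assume j: "j \<in> {1..tt}"
      have add: "0 \<le> of_nat a * nw i / of_nat GG" for a
        using nwpos[OF i] by simp
      show "0 < nw' j"
      proof -
        consider "j < i - 1" | "j = i - 1" | "j = i" | "j > i \<and> j \<noteq> i - 1" by linarith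
        then show ?thesis
        proof cases
          case 1 then show ?thesis using nwpos[of j] j tt unfolding nw'_def by simp
        next
          case 2 then have "0 < nw j" using nwpos[of j] j tt by simp
          then show ?thesis using 2 add[of "gdim Vf (Suc i)"] unfolding nw'_def by simp
        next
          case 3 then have "0 < nw (Suc i)" using nwpos[of "Suc i"] j tt by simp
          then show ?thesis using 3 add[of "gdim Vf i"] i1 unfolding nw'_def by auto
        next
          case 4 then show ?thesis using nwpos[of "Suc j"] j tt unfolding nw'_def by auto
        qed
      qed
    qed
    define g' where "g' = (\<lambda>k. real (gdim Vf' k))"
    define R' where "R' = (\<lambda>k. real (rk (Vf' k)))"
    define D where "D = (\<lambda>k. real (cdim (Vf k)))"
    have gD: "\<And>k. k \<le> Suc t \<Longrightarrow> g k = D k - D (k - 1)" unfolding g_def D_def using gd[OF F] by blast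
    have g'D: "\<And>k. k \<le> t \<Longrightarrow> g' k = real (cdim (Vf' k)) - real (cdim (Vf' (k - 1)))"
      unfolding g'_def using gd[OF F'] tt by simp
    have g'lt: "g' k = g k" if "k < i" for k
    proof -
      have "k - 1 < i" using that by simp
      then show ?thesis using g'D[of k] gD[of k] that i1 unfolding Vf'_def D_def by simp
    qed
    have g'gt: "g' k = g (Suc k)" if "i < k" "k \<le> t" for k
    proof -
      have "k - 1 \<ge> i" "Suc (k - 1) = k" using that by auto
      then show ?thesis using g'D[of k] gD[of "Suc k"] that unfolding Vf'_def D_def by simp
    qed
    have g'i: "g' i = g i + g (Suc i)"
    proof -
      have "g' i = D (Suc i) - D (i - 1)" using g'D[of i] i1 unfolding Vf'_def D_def by simp
      also have "\<dots> = g i + g (Suc i)" using gD[of i] gD[of "Suc i"] i1 by simp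
      finally show ?thesis .
    qed
    have R'lt: "R' k = R k" if "k < i" for k using that unfolding R'_def R_def Vf'_def by simp
    have R'ge: "R' k = R (Suc k)" if "i \<le> k" for k using that unfolding R'_def R_def Vf'_def by simp
    have Gd: "\<And>j. 1 \<le> j \<Longrightarrow> \<Gamma> (Suc j) - \<Gamma> j = p * real_of_rat (nw j)"
      unfolding \<Gamma>_def p_def by (rule Gam_diff)
    define Gm where "Gm = (g i * \<Gamma> i + g (Suc i) * \<Gamma> (Suc i)) / (g i + g (Suc i))"
    define \<Gamma>'' where "\<Gamma>'' = (\<lambda>k. if k < i then \<Gamma> k else if k = i then Gm else \<Gamma> (Suc k))"
    define \<Gamma>' where "\<Gamma>' = Gam tt Vf' nw'"
    define \<Delta> where "\<Delta> = \<Gamma> (Suc i) - \<Gamma> i"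
    have Dpos: "\<Delta> > 0" unfolding \<Delta>_def using Gd[of i] i1 nwpos[OF i] p by simp
    have Gmi: "Gm - \<Gamma> i = g (Suc i) * \<Delta> / (g i + g (Suc i))"
      unfolding Gm_def \<Delta>_def using gi by (simp add: field_simps)
    have Gmi1: "\<Gamma> (Suc i) - Gm = g i * \<Delta> / (g i + g (Suc i))"
      unfolding Gm_def \<Delta>_def using gi by (simp add: field_simps)
    have ratc: "real_of_rat (of_nat a * nw i / of_nat GG) = real a * real_of_rat (nw i) / (g i + g (Suc i))" for a
      using GGr by (simp add: of_rat_mult of_rat_divide)
    have eqG: "\<Gamma>' k = \<Gamma>'' k" if k: "k \<in> {1..t}" for k
    proof -
      have "\<Gamma>' k = \<Gamma>'' k"
      proof (rule uniq[where t = tt and g = g'])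
        show "k \<in> {1..Suc tt}" using k tt by simp
        show "(\<Sum>k\<in>{1..Suc tt}. g' k) \<noteq> 0" unfolding g'_def using gsum[OF F'] by simp
        show "\<forall>j\<in>{1..tt}. \<Gamma>' (Suc j) - \<Gamma>' j = \<Gamma>'' (Suc j) - \<Gamma>'' j"
        proof
          fix j assume j: "j \<in> {1..tt}"
          have l: "\<Gamma>' (Suc j) - \<Gamma>' j = p * real_of_rat (nw' j)"
            unfolding \<Gamma>'_def p_def using j by (intro Gam_diff) simp
          consider "Suc j < i" | "Suc j = i" | "j = i" | "j > i" by linarith
          then show "\<Gamma>' (Suc j) - \<Gamma>' j = \<Gamma>'' (Suc j) - \<Gamma>'' j"
          proof cases
            case 1
            then have "j < i - 1" "Suc j < i" "j < i" by auto
            then have "nw' j = nw j" unfolding nw'_def by simp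
            then show ?thesis using l Gd[of j] j \<open>Suc j < i\<close> \<open>j < i\<close> unfolding \<Gamma>''_def by simp
          next
            case 2
            then have jj: "j = i - 1" "j < i" by auto
            have "\<Gamma>'' (Suc j) - \<Gamma>'' j = (Gm - \<Gamma> i) + (\<Gamma> (Suc j) - \<Gamma> j)"
              using 2 jj unfolding \<Gamma>''_def by simp
            also have "\<dots> = g (Suc i) * \<Delta> / (g i + g (Suc i)) + p * real_of_rat (nw j)"
              using Gmi Gd[of j] j by simp
            also have "\<dots> = p * real_of_rat (nw' j)"
              unfolding nw'_def using jj ratc[of "gdim Vf (Suc i)"] Gd[of i] i1
              by (simp add: of_rat_add \<Delta>_def g_def field_simps)
            finally show ?thesis using l by simp
          next
            case 3
            then have jj: "j \<noteq> i - 1" "\<not> j < i - 1" using i1 by auto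
            have "\<Gamma>'' (Suc j) - \<Gamma>'' j = (\<Gamma> (Suc i) - Gm) + (\<Gamma> (Suc (Suc i)) - \<Gamma> (Suc i))"
              using 3 unfolding \<Gamma>''_def by simp
            also have "\<dots> = g i * \<Delta> / (g i + g (Suc i)) + p * real_of_rat (nw (Suc i))"
              using Gmi1 Gd[of "Suc i"] by simp
            also have "\<dots> = p * real_of_rat (nw' j)"
              unfolding nw'_def using 3 jj ratc[of "gdim Vf i"] Gd[of i] i1
              by (simp add: of_rat_add \<Delta>_def g_def field_simps)
            finally show ?thesis using l by simp
          next
            case 4
            then have "\<not> j < i - 1" "j \<noteq> i - 1" "j \<noteq> i" "\<not> Suc j < i" "\<not> j < i" "Suc j \<noteq> i" by auto
            then have "nw' j = nw (Suc j)" unfolding nw'_def by simp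
            then show ?thesis using l Gd[of "Suc j"] 4 \<open>\<not> Suc j < i\<close> \<open>\<not> j < i\<close> \<open>j \<noteq> i\<close> \<open>Suc j \<noteq> i\<close>
              unfolding \<Gamma>''_def by simp
          qed
        qed
        have s1: "(\<Sum>k\<in>{1..Suc tt}. g' k * \<Gamma>' k) = 0"
          unfolding g'_def \<Gamma>'_def by (rule Gam_sum[OF gsum[OF F']])
        have "(\<Sum>k\<in>{1..t}. g' k * \<Gamma>'' k) =
            (\<Sum>k\<in>{1..Suc t}. g k * \<Gamma> k) - g i * \<Gamma> i - g (Suc i) * \<Gamma> (Suc i) + g' i * \<Gamma>'' i"
          by (rule reidx) (use i1 g'lt g'gt in \<open>auto simp: \<Gamma>''_def\<close>)
        also have "(\<Sum>k\<in>{1..Suc t}. g k * \<Gamma> k) = 0"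
          unfolding g_def \<Gamma>_def by (rule Gam_sum[OF gsum[OF F]])
        also have "g' i * \<Gamma>'' i = g i * \<Gamma> i + g (Suc i) * \<Gamma> (Suc i)"
          unfolding g'i \<Gamma>''_def Gm_def using gi by simp
        finally have s2: "(\<Sum>k\<in>{1..t}. g' k * \<Gamma>'' k) = 0" by simp
        show "(\<Sum>k\<in>{1..Suc tt}. g' k * \<Gamma>' k) = (\<Sum>k\<in>{1..Suc tt}. g' k * \<Gamma>'' k)"
          using s1 s2 tt by simp
      qed
      then show ?thesis .
    qed
    define N where "N = (\<Sum>k\<in>{1..Suc t}. \<Gamma> k * (R k - R (k - 1)))"
    define Q where "Q = (\<Sum>k\<in>{1..Suc t}. g k * (\<Gamma> k)^2)"
    define N' where "N' = (\<Sum>k\<in>{1..t}. \<Gamma>'' k * (R' k - R' (k - 1)))"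
    define Q' where "Q' = (\<Sum>k\<in>{1..t}. g' k * (\<Gamma>'' k)^2)"
    have muf: "kempf_mu r rk t Vf nw = N / sqrt Q"
      unfolding N_def Q_def \<Gamma>_def R_def g_def by (rule mu_formula[OF F rk_zero rk_top])
    have "kempf_mu r rk tt Vf' nw' = (\<Sum>k\<in>{1..t}. \<Gamma>' k * (R' k - R' (k - 1))) / sqrt (\<Sum>k\<in>{1..t}. g' k * (\<Gamma>' k)^2)"
      using mu_formula[OF F' rk_zero rk_top, of nw'] tt unfolding \<Gamma>'_def R'_def g'_def by simp
    also have "(\<Sum>k\<in>{1..t}. \<Gamma>' k * (R' k - R' (k - 1))) = N'"
      unfolding N'_def using eqG by (intro sum.cong) auto
    also have "(\<Sum>k\<in>{1..t}. g' k * (\<Gamma>' k)^2) = Q'"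
      unfolding Q'_def using eqG by (intro sum.cong) auto
    finally have mu'f: "kempf_mu r rk tt Vf' nw' = N' / sqrt Q'" .
    have N'e: "N' = N - \<Gamma> i * (R i - R (i - 1)) - \<Gamma> (Suc i) * (R (Suc i) - R (Suc i - 1))
                 + \<Gamma>'' i * (R' i - R' (i - 1))"
      unfolding N'_def N_def
    proof (rule reidx)
      show "\<forall>k<i. \<Gamma>'' k * (R' k - R' (k - 1)) = \<Gamma> k * (R k - R (k - 1))"
        using R'lt unfolding \<Gamma>''_def by simp
      show "\<forall>k. i < k \<and> k \<le> t \<longrightarrow> \<Gamma>'' k * (R' k - R' (k - 1)) = \<Gamma> (Suc k) * (R (Suc k) - R (Suc k - 1))"
      proof (intro allI impI)
        fix k assume "i < k \<and> k \<le> t"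
        then have "i < k" by simp
        then have "R' k = R (Suc k)" "R' (k - 1) = R k" using R'ge[of k] R'ge[of "k - 1"] by auto
        then show "\<Gamma>'' k * (R' k - R' (k - 1)) = \<Gamma> (Suc k) * (R (Suc k) - R (Suc k - 1))"
          using \<open>i < k\<close> unfolding \<Gamma>''_def by simp
      qed
    qed (use i1 in auto)
    have Ri: "R' i = R (Suc i)" "R' (i - 1) = R (i - 1)" using R'ge[of i] R'lt[of "i - 1"] i1 by auto
    have N'e2: "N' - N = \<Delta> / (g i + g (Suc i)) * ((R i - R (i - 1)) * g (Suc i) - (R (Suc i) - R i) * g i)"
    proof -
      have "N' - N = (Gm - \<Gamma> i) * (R i - R (i - 1)) - (\<Gamma> (Suc i) - Gm) * (R (Suc i) - R i)"
        using N'e Ri unfolding \<Gamma>''_def by (simp add: algebra_simps)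
      also have "\<dots> = \<Delta> / (g i + g (Suc i)) * ((R i - R (i - 1)) * g (Suc i) - (R (Suc i) - R i) * g i)"
      proof -
        have Gnz: "g i + g (Suc i) \<noteq> 0" using gi by simp
        define c where "c = \<Delta> / (g i + g (Suc i))"
        have a1: "Gm - \<Gamma> i = g (Suc i) * c" unfolding c_def Gmi by simp
        have a2: "\<Gamma> (Suc i) - Gm = g i * c" unfolding c_def Gmi1 by simp
        show ?thesis unfolding a1 a2 c_def[symmetric] by (simp add: algebra_simps)
      qed
      finally show ?thesis .
    qed
    have NN: "N \<le> N'"
    proof -
      have "0 \<le> \<Delta> / (g i + g (Suc i))" using Dpos gi by simp
      moreover have "0 \<le> (R i - R (i - 1)) * g (Suc i) - (R (Suc i) - R i) * g i" using ge by simp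
      ultimately show ?thesis using N'e2 by (metis diff_ge_0_iff_ge mult_nonneg_nonneg)
    qed
    have Q'e: "Q' = Q - g i * (\<Gamma> i)^2 - g (Suc i) * (\<Gamma> (Suc i))^2 + g' i * (\<Gamma>'' i)^2"
      unfolding Q'_def Q_def
      by (rule reidx) (use i1 g'lt g'gt in \<open>auto simp: \<Gamma>''_def\<close>)
    have hGm: "(g i + g (Suc i)) * Gm = g i * \<Gamma> i + g (Suc i) * \<Gamma> (Suc i)"
      unfolding Gm_def using gi by simp
    have poly: "(g i + g (Suc i)) * (g i * (\<Gamma> i)^2 + g (Suc i) * (\<Gamma> (Suc i))^2)
        - (g i * \<Gamma> i + g (Suc i) * \<Gamma> (Suc i))^2 = g i * g (Suc i) * \<Delta>^2"
      unfolding \<Delta>_def by (simp add: algebra_simps power2_eq_square)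
    have "(g i + g (Suc i)) * (g i * (\<Gamma> i)^2 + g (Suc i) * (\<Gamma> (Suc i))^2 - (g i + g (Suc i)) * Gm^2)
        = g i * g (Suc i) * \<Delta>^2"
    proof -
      have "(g i + g (Suc i)) * ((g i + g (Suc i)) * Gm^2) = ((g i + g (Suc i)) * Gm)^2"
        by (simp add: power2_eq_square)
      then show ?thesis using poly hGm by (simp add: right_diff_distrib)
    qed
    moreover have "g i * g (Suc i) * \<Delta>^2 > 0" using gi Dpos by simp
    ultimately have "g i * (\<Gamma> i)^2 + g (Suc i) * (\<Gamma> (Suc i))^2 - (g i + g (Suc i)) * Gm^2 > 0"
      using gi by (metis add_pos_pos zero_less_mult_pos)
    then have QQ: "Q' < Q" using Q'e g'i unfolding \<Gamma>''_def by simp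
    have Qnn: "0 \<le> Q" unfolding Q_def g_def by (intro sum_nonneg) simp
    have Q'nn: "0 \<le> Q'" unfolding Q'_def g'_def by (intro sum_nonneg) simp
    have Qpos: "Q > 0"
    proof (rule ccontr)
      assume "\<not> Q > 0" then have "Q = 0" using Qnn by simp
      then show False using mupos muf by simp
    qed
    have Npos: "N > 0" using mupos muf Qpos by (simp add: zero_less_divide_iff)
    have Q'pos: "Q' > 0"
    proof (rule ccontr)
      assume "\<not> Q' > 0" then have "Q' = 0" using Q'nn by simp
      then have "\<forall>k\<in>{1..t}. g' k * (\<Gamma>'' k)^2 = 0"
        unfolding Q'_def g'_def by (subst sum_nonneg_eq_0_iff[symmetric]) auto
      moreover have "\<forall>k\<in>{1..t}. g' k > 0" unfolding g'_def using gpos[OF F'] tt by simp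
      ultimately have "\<forall>k\<in>{1..t}. \<Gamma>'' k = 0" by (metis less_irrefl mult_eq_0_iff power_eq_0_iff)
      then have "N' = 0" unfolding N'_def by simp
      then show False using Npos NN by simp
    qed
    have "N / sqrt Q < N / sqrt Q'"
      using Npos Qpos Q'pos QQ by (intro divide_strict_left_mono) auto
    also have "\<dots> \<le> N' / sqrt Q'" using NN Q'pos by (intro divide_right_mono) auto
    finally have "kempf_mu r rk t Vf nw < kempf_mu r rk tt Vf' nw'" using muf mu'f by simp
    then show False using mx[OF wf'] by simp
  qed
  show ?thesis
  proof
    fix i assume i: "i \<in> {1..t}"
    have k: "(R i - R (i - 1)) * g (Suc i) < (R (Suc i) - R i) * g i" by (rule key[OF i])
    have gi: "g i > 0" "g (Suc i) > 0" using gp i by auto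
    define M where "M = real m ^ (n + 1)"
    have M: "M > 0" unfolding M_def using assms(2) by simp
    have e1: "((R i - R (i - 1)) * p - real r * g i) / (g i * p) = (R i - R (i - 1)) / g i - real r / p"
      using gi p by (simp add: field_simps)
    have e2: "((R (Suc i) - R (Suc i - 1)) * p - real r * g (Suc i)) / (g (Suc i) * p)
        = (R (Suc i) - R i) / g (Suc i) - real r / p"
      using gi p by (simp add: field_simps)
    have "(R i - R (i - 1)) / g i < (R (Suc i) - R i) / g (Suc i)"
      using k gi by (simp add: field_simps)
    then have "((R i - R (i - 1)) * p - real r * g i) / (g i * p)
        < ((R (Suc i) - R (Suc i - 1)) * p - real r * g (Suc i)) / (g (Suc i) * p)"
      unfolding e1 e2 by simp
    then have "M * (((R i - R (i - 1)) * p - real r * g i) / (g i * p))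
        < M * (((R (Suc i) - R (Suc i - 1)) * p - real r * g (Suc i)) / (g (Suc i) * p))"
      using M by (rule mult_strict_left_mono)
    then show "let v = (\<lambda>j. real m ^ (n + 1) *
                       ((real (rk (Vf j)) - real (rk (Vf (j - 1)))) * real CARD('k)
                          - real r * real (gdim Vf j))
                       / (real (gdim Vf j) * real CARD('k)))
            in v i < v (Suc i)"
      unfolding Let_def M_def R_def g_def p_def by (simp only: times_divide_eq_right)
  qed
qed

end
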